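(* Let $n\in\mathbb{N}$. For each $k\in\mathbb{N}$ let $X_k = \{\alpha\in\mathcal{O}\,|\,N(\alpha) = k\}$, $t_k = |X_k/\mathcal{O}^{\times}|$ and $x_{1,k}, \dots, x_{t_k,k}$ be a set of representatives for $X_k/\mathcal{O}^{\times}$ (under right multiplication by units). For such $k$ define \[R_{k} := \left\{\begin{pmatrix}x_{i,k} & v\\ w & x_{j,k}\end{pmatrix}\,:\,1\leq i,j\leq t_k,\ v,w\in X_{n-k},\ x_{i,k}\overline{w} + v\overline{x_{j,k}} = 0\right\}.\] Then the following matrices are representatives for $(\text{GU}_2(D)_n\cap M_2(\mathcal{O})^{\times})/ \Gamma^{(1)}$ (cosets under right multiplication by $\Gamma^{(1)}$): $\bigcup_{k=m+1}^n R_k$ if $n=2m+1$ is odd, and $\left(\bigcup_{k=m+1}^n R_k\right)\cup R_{m}'$ if $n=2m$ is even. Here $R_m'\subset R_m$ is the finite subset obtained as follows: each matrix $\begin{pmatrix}x_{i,m} & v\\ w & x_{j,m}\end{pmatrix}\in R_m$ is equivalent under right multiplication by an antidiagonal element of $\Gamma^{(1)}$ to at most one other matrix of $R_m$, namely $\begin{pmatrix}x_{s,m} & \frac{x_{i,m}\overline{w}x_{t,m}}{m}\\ \frac{x_{j,m}\overline{v}x_{s,m}}{m} & x_{t,m}\end{pmatrix}$ where $v\sim x_{s,m}$ and $w\sim x_{t,m}$ under right unit multiplication; $R_m'$ consists of one chosen matrix from each such equivalence pair.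
   Context: $D$ is a definite quaternion algebra over $\mathbb{Q}$ ramified exactly at $\{p,\infty\}$ for a prime $p$, with standard involution $x\mapsto\overline{x}$ and reduced norm $N$; $\mathcal{O}$ is a fixed maximal order with (finite) unit group $\mathcal{O}^\times$. $\text{GU}_2(D) = \{g\in M_2(D)\,|\,g\overline{g}^T = \mu(g)I,\ \mu(g)\in\mathbb{Q}^\times\}$, and $\text{GU}_2(D)_n$ denotes its elements of similitude $\mu(g)=n$. $M_2(\mathcal{O})^\times = \text{GL}_2(D)\cap M_2(\mathcal{O})$. $\Gamma^{(1)} = \text{GU}_2(\mathcal{O})$ is the finite group of matrices $\begin{pmatrix}\alpha&0\\0&\beta\end{pmatrix}$ and $\begin{pmatrix}0&\alpha\\ \beta&0\end{pmatrix}$ with $\alpha,\beta\in\mathcal{O}^\times$. In the paper this is applied (for $p\in\{2,3\}$, $n=q$ a prime $\neq p$) to obtain Hecke representatives for the operator $T_{u,q}$. *)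

theory Defs
  imports "HOL-Number_Theory.Number_Theory"
begin

text \<open>Elements x0 + x1 i + x2 j + x3 k with i^2 = a, j^2 = b, k = ij = -ji.
  Every quaternion algebra over Q is isomorphic to some (a,b)_Q with a,b nonzero
  integers, so we fix D in this form.\<close>

datatype quat = Quat (q0: rat) (q1: rat) (q2: rat) (q3: rat)

instantiation quat :: "{zero, plus, uminus, minus}"
begin
definition "0 = Quat 0 0 0 0"
definition "x + y = Quat (q0 x + q0 y) (q1 x + q1 y) (q2 x + q2 y) (q3 x + q3 y)"
definition "- x = Quat (- q0 x) (- q1 x) (- q2 x) (- q3 x)"
definition "x - y = Quat (q0 x - q0 y) (q1 x - q1 y) (q2 x - q2 y) (q3 x - q3 y)"
instance ..
end

definition qone :: quat where "qone = Quat 1 0 0 0"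

definition qsc :: "rat \<Rightarrow> quat \<Rightarrow> quat" where
  "qsc r x = Quat (r * q0 x) (r * q1 x) (r * q2 x) (r * q3 x)"

definition qof_rat :: "rat \<Rightarrow> quat" where "qof_rat r = Quat r 0 0 0"

definition qmul :: "int \<Rightarrow> int \<Rightarrow> quat \<Rightarrow> quat \<Rightarrow> quat" where
  "qmul a b x y = Quat
     (q0 x * q0 y + of_int a * q1 x * q1 y + of_int b * q2 x * q2 y - of_int (a*b) * q3 x * q3 y)
     (q0 x * q1 y + q1 x * q0 y - of_int b * q2 x * q3 y + of_int b * q3 x * q2 y)
     (q0 x * q2 y + q2 x * q0 y + of_int a * q1 x * q3 y - of_int a * q3 x * q1 y)
     (q0 x * q3 y + q3 x * q0 y + q1 x * q2 y - q2 x * q1 y)"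

definition qconj :: "quat \<Rightarrow> quat" where
  "qconj x = Quat (q0 x) (- q1 x) (- q2 x) (- q3 x)"

definition qnorm :: "int \<Rightarrow> int \<Rightarrow> quat \<Rightarrow> rat" where
  "qnorm a b x = (q0 x)^2 - of_int a * (q1 x)^2 - of_int b * (q2 x)^2 + of_int (a*b) * (q3 x)^2"

text \<open>(a,b)_Q is split at the prime l iff z^2 = a x^2 + b y^2 has a nontrivial solution in Q_l,
  which (by compactness of Z_l) holds iff for every e there is a primitive solution modulo l^e.\<close>
definition locally_split :: "int \<Rightarrow> int \<Rightarrow> int \<Rightarrow> bool" where
  "locally_split l a b = (\<forall>e::nat. \<exists>x y z :: int.
      \<not> (l dvd x \<and> l dvd y \<and> l dvd z) \<and> [a * x^2 + b * y^2 = z^2] (mod l^e))"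

text \<open>(a,b)_Q is definite (ramified at infinity) iff a < 0 and b < 0.\<close>
definition ramified_exactly_at_p_inf :: "int \<Rightarrow> int \<Rightarrow> int \<Rightarrow> bool" where
  "ramified_exactly_at_p_inf p a b =
     (a < 0 \<and> b < 0 \<and> (\<forall>l::int. prime l \<longrightarrow> (\<not> locally_split l a b \<longleftrightarrow> l = p)))"

definition qlin :: "(nat \<Rightarrow> 'r) \<Rightarrow> ('r \<Rightarrow> rat) \<Rightarrow> (nat \<Rightarrow> quat) \<Rightarrow> quat" where
  "qlin c f e = qsc (f (c 0)) (e 0) + qsc (f (c 1)) (e 1) + qsc (f (c 2)) (e 2) + qsc (f (c 3)) (e 3)"

definition full_lattice :: "quat set \<Rightarrow> bool" where
  "full_lattice L = (\<exists>e :: nat \<Rightarrow> quat.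
      L = {qlin c of_int e | c :: nat \<Rightarrow> int. True} \<and>
      (\<forall>x. \<exists>c :: nat \<Rightarrow> rat. x = qlin c id e))"

definition is_order :: "int \<Rightarrow> int \<Rightarrow> quat set \<Rightarrow> bool" where
  "is_order a b Ord = (full_lattice Ord \<and> qone \<in> Ord \<and>
     (\<forall>x\<in>Ord. \<forall>y\<in>Ord. x + y \<in> Ord \<and> - x \<in> Ord \<and> qmul a b x y \<in> Ord))"

definition maximal_order :: "int \<Rightarrow> int \<Rightarrow> quat set \<Rightarrow> bool" where
  "maximal_order a b Ord = (is_order a b Ord \<and>
     (\<forall>Ord'. is_order a b Ord' \<and> Ord \<subseteq> Ord' \<longrightarrow> Ord' = Ord))"

definition qunits :: "int \<Rightarrow> int \<Rightarrow> quat set \<Rightarrow> quat set" where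
  "qunits a b Ord = {u \<in> Ord. \<exists>v\<in>Ord. qmul a b u v = qone \<and> qmul a b v u = qone}"

definition normset :: "int \<Rightarrow> int \<Rightarrow> quat set \<Rightarrow> nat \<Rightarrow> quat set" where
  "normset a b Ord k = {x \<in> Ord. qnorm a b x = of_nat k}"

definition unit_rep_system :: "int \<Rightarrow> int \<Rightarrow> quat set \<Rightarrow> nat \<Rightarrow> quat set \<Rightarrow> bool" where
  "unit_rep_system a b Ord k xs = (xs \<subseteq> normset a b Ord k \<and>
     (\<forall>x\<in>normset a b Ord k. \<exists>!r\<in>xs. \<exists>u\<in>qunits a b Ord. x = qmul a b r u))"

text \<open>(A, B, C, E) represents the matrix [[A, B], [C, E]].\<close>
type_synonym mat2 = "quat \<times> quat \<times> quat \<times> quat"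

fun mmul :: "int \<Rightarrow> int \<Rightarrow> mat2 \<Rightarrow> mat2 \<Rightarrow> mat2" where
  "mmul a b (x11, x12, x21, x22) (y11, y12, y21, y22) =
     (qmul a b x11 y11 + qmul a b x12 y21, qmul a b x11 y12 + qmul a b x12 y22,
      qmul a b x21 y11 + qmul a b x22 y21, qmul a b x21 y12 + qmul a b x22 y22)"

fun mstar :: "mat2 \<Rightarrow> mat2" where
  "mstar (x11, x12, x21, x22) = (qconj x11, qconj x21, qconj x12, qconj x22)"

definition mscalar :: "rat \<Rightarrow> mat2" where
  "mscalar r = (qof_rat r, 0, 0, qof_rat r)"

definition mone :: mat2 where "mone = mscalar 1"

definition GU2_n :: "int \<Rightarrow> int \<Rightarrow> nat \<Rightarrow> mat2 set" where
  "GU2_n a b n = {g. mmul a b g (mstar g) = mscalar (of_nat n)}"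

definition M2O_units :: "int \<Rightarrow> int \<Rightarrow> quat set \<Rightarrow> mat2 set" where
  "M2O_units a b Ord = {(x11, x12, x21, x22). x11 \<in> Ord \<and> x12 \<in> Ord \<and> x21 \<in> Ord \<and> x22 \<in> Ord \<and>
      (\<exists>h. mmul a b (x11, x12, x21, x22) h = mone \<and> mmul a b h (x11, x12, x21, x22) = mone)}"

definition Gamma1_diag :: "int \<Rightarrow> int \<Rightarrow> quat set \<Rightarrow> mat2 set" where
  "Gamma1_diag a b Ord = {(\<alpha>, 0, 0, \<beta>) | \<alpha> \<beta>. \<alpha> \<in> qunits a b Ord \<and> \<beta> \<in> qunits a b Ord}"

definition Gamma1_antidiag :: "int \<Rightarrow> int \<Rightarrow> quat set \<Rightarrow> mat2 set" where
  "Gamma1_antidiag a b Ord = {(0, \<alpha>, \<beta>, 0) | \<alpha> \<beta>. \<alpha> \<in> qunits a b Ord \<and> \<beta> \<in> qunits a b Ord}"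

definition Gamma1 :: "int \<Rightarrow> int \<Rightarrow> quat set \<Rightarrow> mat2 set" where
  "Gamma1 a b Ord = Gamma1_diag a b Ord \<union> Gamma1_antidiag a b Ord"

definition coset_reps :: "int \<Rightarrow> int \<Rightarrow> quat set \<Rightarrow> nat \<Rightarrow> mat2 set \<Rightarrow> bool" where
  "coset_reps a b Ord n Reps = (Reps \<subseteq> GU2_n a b n \<inter> M2O_units a b Ord \<and>
     (\<forall>g \<in> GU2_n a b n \<inter> M2O_units a b Ord. \<exists>!r\<in>Reps. \<exists>\<gamma>\<in>Gamma1 a b Ord. g = mmul a b r \<gamma>))"

definition Rset :: "int \<Rightarrow> int \<Rightarrow> quat set \<Rightarrow> nat \<Rightarrow> (nat \<Rightarrow> quat set) \<Rightarrow> nat \<Rightarrow> mat2 set" where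
  "Rset a b Ord n xs k = {(x, v, w, y) | x v w y. x \<in> xs k \<and> y \<in> xs k \<and>
      v \<in> normset a b Ord (n - k) \<and> w \<in> normset a b Ord (n - k) \<and>
      qmul a b x (qconj w) + qmul a b v (qconj y) = 0}"

end

theory Submission
  imports Defs
begin

lemma quat_eqI: "q0 x = q0 y \<Longrightarrow> q1 x = q1 y \<Longrightarrow> q2 x = q2 y \<Longrightarrow> q3 x = q3 y \<Longrightarrow> x = y"
  by (cases x; cases y) auto

lemma quat_comps[simp]:
  "q0 0 = 0" "q1 0 = 0" "q2 0 = 0" "q3 0 = 0"
  "q0 (x + y) = q0 x + q0 y" "q1 (x + y) = q1 x + q1 y" "q2 (x + y) = q2 x + q2 y" "q3 (x + y) = q3 x + q3 y"
  "q0 (- x) = - q0 x" "q1 (- x) = - q1 x" "q2 (- x) = - q2 x" "q3 (- x) = - q3 x"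
  "q0 (x - y) = q0 x - q0 y" "q1 (x - y) = q1 x - q1 y" "q2 (x - y) = q2 x - q2 y" "q3 (x - y) = q3 x - q3 y"
  by (simp_all add: zero_quat_def plus_quat_def uminus_quat_def minus_quat_def)

instance quat :: ab_group_add
  by standard (auto intro!: quat_eqI)

lemma quat_comps2[simp]:
  "q0 qone = 1" "q1 qone = 0" "q2 qone = 0" "q3 qone = 0"
  "q0 (qof_rat r) = r" "q1 (qof_rat r) = 0" "q2 (qof_rat r) = 0" "q3 (qof_rat r) = 0"
  "q0 (qsc r x) = r * q0 x" "q1 (qsc r x) = r * q1 x" "q2 (qsc r x) = r * q2 x" "q3 (qsc r x) = r * q3 x"
  "q0 (qconj x) = q0 x" "q1 (qconj x) = - q1 x" "q2 (qconj x) = - q2 x" "q3 (qconj x) = - q3 x"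
  by (simp_all add: qone_def qof_rat_def qsc_def qconj_def)

lemma qmul_comps[simp]:
  "q0 (qmul a b x y) = q0 x * q0 y + of_int a * q1 x * q1 y + of_int b * q2 x * q2 y - of_int (a*b) * q3 x * q3 y"
  "q1 (qmul a b x y) = q0 x * q1 y + q1 x * q0 y - of_int b * q2 x * q3 y + of_int b * q3 x * q2 y"
  "q2 (qmul a b x y) = q0 x * q2 y + q2 x * q0 y + of_int a * q1 x * q3 y - of_int a * q3 x * q1 y"
  "q3 (qmul a b x y) = q0 x * q3 y + q3 x * q0 y + q1 x * q2 y - q2 x * q1 y"
  by (simp_all add: qmul_def)

lemma qmul_assoc: "qmul a b (qmul a b x y) z = qmul a b x (qmul a b y z)"
  by (rule quat_eqI) (simp_all add: algebra_simps)

lemma qmul_add_left: "qmul a b (x + y) z = qmul a b x z + qmul a b y z"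
  by (rule quat_eqI) (simp_all add: algebra_simps)
lemma qmul_add_right: "qmul a b z (x + y) = qmul a b z x + qmul a b z y"
  by (rule quat_eqI) (simp_all add: algebra_simps)
lemma qmul_zero[simp]: "qmul a b 0 x = 0" "qmul a b x 0 = 0"
  by (rule quat_eqI; simp)+
lemma qmul_one[simp]: "qmul a b qone x = x" "qmul a b x qone = x"
  by (rule quat_eqI; simp)+
lemma qmul_neg: "qmul a b (- x) y = - qmul a b x y" "qmul a b x (- y) = - qmul a b x y"
  by (rule quat_eqI; simp add: algebra_simps)+
lemma qof_mul: "qmul a b (qof_rat r) x = qsc r x" "qmul a b x (qof_rat r) = qsc r x"
  by (rule quat_eqI; simp add: algebra_simps)+
lemma qsc_mul: "qmul a b (qsc r x) y = qsc r (qmul a b x y)" "qmul a b x (qsc r y) = qsc r (qmul a b x y)"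
  by (rule quat_eqI; simp add: algebra_simps)+
lemma qsc_qsc: "qsc r (qsc s x) = qsc (r*s) x" by (rule quat_eqI; simp)
lemma qsc_one[simp]: "qsc 1 x = x" by (rule quat_eqI; simp)
lemma qsc_zero[simp]: "qsc r 0 = 0" by (rule quat_eqI; simp)
lemma qsc_add: "qsc r (x + y) = qsc r x + qsc r y" by (rule quat_eqI; simp add: algebra_simps)
lemma qsc_qof: "qsc r (qof_rat s) = qof_rat (r*s)" by (rule quat_eqI; simp)
lemma qof_add: "qof_rat r + qof_rat s = qof_rat (r+s)" by (rule quat_eqI; simp)
lemma qof_inj: "qof_rat r = qof_rat s \<longleftrightarrow> r = s" by (metis quat_comps2(5))
lemma qof_zero: "qof_rat 0 = 0" by (rule quat_eqI; simp)
lemma qof_one: "qof_rat 1 = qone" by (rule quat_eqI; simp)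
lemma qsc_eq0: "qsc r x = 0 \<Longrightarrow> r \<noteq> 0 \<Longrightarrow> x = 0"
  by (metis qsc_one qsc_qsc qsc_zero right_inverse mult.commute)

lemma qconj_mul: "qconj (qmul a b x y) = qmul a b (qconj y) (qconj x)"
  by (rule quat_eqI; simp add: algebra_simps)
lemma qconj_conj[simp]: "qconj (qconj x) = x" by (rule quat_eqI; simp)
lemma qconj_add: "qconj (x + y) = qconj x + qconj y" by (rule quat_eqI; simp)
lemma qconj_zero[simp]: "qconj 0 = 0" by (rule quat_eqI; simp)
lemma qconj_one[simp]: "qconj qone = qone" by (rule quat_eqI; simp)
lemma qconj_eq0: "qconj x = 0 \<longleftrightarrow> x = 0" by (metis qconj_conj qconj_zero)
lemma mul_conj: "qmul a b x (qconj x) = qof_rat (qnorm a b x)" "qmul a b (qconj x) x = qof_rat (qnorm a b x)"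
  by (rule quat_eqI; simp add: qnorm_def algebra_simps power2_eq_square)+
lemma qnorm_conj[simp]: "qnorm a b (qconj x) = qnorm a b x" by (simp add: qnorm_def)
lemma qnorm_neg[simp]: "qnorm a b (- x) = qnorm a b x" by (simp add: qnorm_def)
lemma qnorm_one[simp]: "qnorm a b qone = 1" by (simp add: qnorm_def)
lemma qnorm_zero[simp]: "qnorm a b 0 = 0" by (simp add: qnorm_def)
lemma qnorm_mul: "qnorm a b (qmul a b x y) = qnorm a b x * qnorm a b y"
  unfolding qnorm_def by (simp add: algebra_simps power2_eq_square)

lemma qnorm_nonneg: assumes "a < 0" "b < 0" shows "0 \<le> qnorm a b x"
proof -
  have "0 \<le> - of_int a * (q1 x)^2" "0 \<le> - of_int b * (q2 x)^2" "0 \<le> of_int (a*b) * (q3 x)^2"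
    using assms by (simp_all add: mult_nonpos_nonneg mult_nonneg_nonneg mult_nonpos_nonpos)
  moreover have "0 \<le> (q0 x)^2" by simp
  ultimately show ?thesis unfolding qnorm_def by linarith
qed

lemma qnorm_eq0: assumes "a < 0" "b < 0" "qnorm a b x = 0" shows "x = 0"
proof -
  have h: "0 \<le> - of_int a * (q1 x)^2" "0 \<le> - of_int b * (q2 x)^2" "0 \<le> of_int (a*b) * (q3 x)^2"
    "0 \<le> (q0 x)^2"
    using assms by (simp_all add: mult_nonpos_nonneg mult_nonneg_nonneg mult_nonpos_nonpos)
  have e: "(q0 x)^2 + (- of_int a * (q1 x)^2) + (- of_int b * (q2 x)^2) + of_int (a*b) * (q3 x)^2 = 0"
    using assms(3) unfolding qnorm_def by simp
  have "(q0 x)^2 = 0" "- of_int a * (q1 x)^2 = 0" "- of_int b * (q2 x)^2 = 0" "of_int (a*b) * (q3 x)^2 = (0::rat)"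
    using h e by linarith+
  moreover have "of_int a \<noteq> (0::rat)" "of_int b \<noteq> (0::rat)" "of_int (a*b) \<noteq> (0::rat)" using assms by auto
  ultimately show ?thesis by (intro quat_eqI) auto
qed

lemma common_denom:
  fixes S :: "rat set"
  assumes "finite S" shows "\<exists>d::int. d > 0 \<and> (\<forall>r\<in>S. of_int d * r \<in> \<int>)"
  using assms
proof (induction S rule: finite_induct)
  case empty then show ?case by (intro exI[of _ 1]) auto
next
  case (insert r S)
  then obtain d where d: "d > 0" "\<forall>r\<in>S. of_int d * r \<in> \<int>" by auto
  obtain p q where pq: "quotient_of r = (p, q)" by force
  have q: "q > 0" using pq quotient_of_denom_pos by blast
  have r: "r = of_int p / of_int q" using pq quotient_of_div by blast
  have "of_int (d*q) * r = of_int (d * p)" using q r by simp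
  then have "of_int (d*q) * r \<in> \<int>" by (simp only: Ints_of_int)
  moreover have "of_int (d*q) * s \<in> \<int>" if "s \<in> S" for s
  proof -
    have "of_int (d*q) * s = of_int q * (of_int d * s)" by simp
    then show ?thesis using d(2) that by (metis Ints_mult Ints_of_int)
  qed
  ultimately show ?case using d q by (intro exI[of _ "d*q"]) (auto simp del: of_int_mult)
qed

lemma int_of_pow:
  fixes r :: rat and D :: int
  assumes D: "D > 0" and h: "\<forall>k. of_int D * r^k \<in> \<int>" shows "r \<in> \<int>"
proof -
  obtain p q where pq: "quotient_of r = (p, q)" by force
  have q: "q > 0" using pq quotient_of_denom_pos by blast
  have r: "r = of_int p / of_int q" using pq quotient_of_div by blast
  have cop: "coprime p q" using pq quotient_of_coprime by blast
  have dv: "q^k dvd D" for k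
  proof -
    obtain z where z: "of_int D * r^k = of_int z" using h Ints_cases by metis
    then have "of_int D * of_int p ^ k = (of_int z * of_int q ^ k :: rat)"
      using q r by (simp add: power_divide field_simps)
    then have "D * p^k = z * q^k" by (metis of_int_eq_iff of_int_mult of_int_power)
    then have "q^k dvd D * p^k" by simp
    moreover have "coprime (q^k) (p^k)" using cop by (simp add: coprime_commute)
    ultimately show ?thesis using coprime_dvd_mult_left_iff by blast
  qed
  have "q = 1"
  proof (rule ccontr)
    assume "q \<noteq> 1"
    then have q2: "q \<ge> 2" using q by linarith
    have "q ^ nat D \<le> D" using dv[of "nat D"] D by (simp add: zdvd_imp_le)
    moreover have "(2::int) ^ nat D \<le> q ^ nat D" using q2 by (simp add: power_mono)
    moreover have "D < 2 ^ nat D"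
    proof -
      have "nat D < 2 ^ nat D" by (rule less_exp)
      then have "int (nat D) < int (2 ^ nat D)" by linarith
      then show ?thesis using D by simp
    qed
    ultimately show False by linarith
  qed
  then show ?thesis using r by simp
qed

lemma comb_int:
  fixes u0 u1 u2 u3 :: rat
  assumes "of_int d * u0 \<in> \<int>" "of_int d * u1 \<in> \<int>" "of_int d * u2 \<in> \<int>" "of_int d * u3 \<in> \<int>"
  shows "of_int d * (of_int c0 * u0 + of_int c1 * u1 + of_int c2 * u2 + of_int c3 * u3) \<in> \<int>"
proof -
  have "of_int d * (of_int c0 * u0 + of_int c1 * u1 + of_int c2 * u2 + of_int c3 * u3) =
    of_int c0 * (of_int d * u0) + of_int c1 * (of_int d * u1) + of_int c2 * (of_int d * u2) + of_int c3 * (of_int d * u3)"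
    by (simp add: algebra_simps)
  then show ?thesis using assms by (simp only: Ints_add Ints_mult Ints_of_int)
qed

lemma qlin_comps:
  "q0 (qlin c of_int e) = of_int (c 0) * q0 (e 0) + of_int (c 1) * q0 (e 1) + of_int (c 2) * q0 (e 2) + of_int (c 3) * q0 (e 3)"
  "q1 (qlin c of_int e) = of_int (c 0) * q1 (e 0) + of_int (c 1) * q1 (e 1) + of_int (c 2) * q1 (e 2) + of_int (c 3) * q1 (e 3)"
  "q2 (qlin c of_int e) = of_int (c 0) * q2 (e 0) + of_int (c 1) * q2 (e 1) + of_int (c 2) * q2 (e 2) + of_int (c 3) * q2 (e 3)"
  "q3 (qlin c of_int e) = of_int (c 0) * q3 (e 0) + of_int (c 1) * q3 (e 1) + of_int (c 2) * q3 (e 2) + of_int (c 3) * q3 (e 3)"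
  by (simp_all add: qlin_def)

lemma lattice_norm_bound:
  assumes "full_lattice L"
  shows "\<exists>D::int. D > 0 \<and> (\<forall>y\<in>L. of_int D * qnorm a b y \<in> \<int>)"
proof -
  obtain e where e: "L = {qlin c of_int e | c :: nat \<Rightarrow> int. True}"
    using assms unfolding full_lattice_def by blast
  define S where "S = set [q0 (e 0), q0 (e 1), q0 (e 2), q0 (e 3), q1 (e 0), q1 (e 1), q1 (e 2), q1 (e 3),
     q2 (e 0), q2 (e 1), q2 (e 2), q2 (e 3), q3 (e 0), q3 (e 1), q3 (e 2), q3 (e 3)]"
  have "finite S" unfolding S_def by simp
  then obtain d where d: "d > 0" "\<And>r. r \<in> S \<Longrightarrow> of_int d * r \<in> \<int>"
    using common_denom by metis
  have dI: "of_int d * q0 (e 0) \<in> \<int>" "of_int d * q0 (e 1) \<in> \<int>" "of_int d * q0 (e 2) \<in> \<int>" "of_int d * q0 (e 3) \<in> \<int>"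
    "of_int d * q1 (e 0) \<in> \<int>" "of_int d * q1 (e 1) \<in> \<int>" "of_int d * q1 (e 2) \<in> \<int>" "of_int d * q1 (e 3) \<in> \<int>"
    "of_int d * q2 (e 0) \<in> \<int>" "of_int d * q2 (e 1) \<in> \<int>" "of_int d * q2 (e 2) \<in> \<int>" "of_int d * q2 (e 3) \<in> \<int>"
    "of_int d * q3 (e 0) \<in> \<int>" "of_int d * q3 (e 1) \<in> \<int>" "of_int d * q3 (e 2) \<in> \<int>" "of_int d * q3 (e 3) \<in> \<int>"
    by (rule d(2); simp add: S_def)+
  have "of_int (d*d) * qnorm a b y \<in> \<int>" if yL: "y \<in> L" for y
  proof -
    obtain c where y: "y = qlin c of_int e" using e yL by blast
    have ci: "of_int d * q0 y \<in> \<int>" "of_int d * q1 y \<in> \<int>" "of_int d * q2 y \<in> \<int>" "of_int d * q3 y \<in> \<int>"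
      unfolding y qlin_comps by (rule comb_int; rule dI)+
    have "of_int (d*d) * qnorm a b y = (of_int d * q0 y)^2 - of_int a * (of_int d * q1 y)^2
      - of_int b * (of_int d * q2 y)^2 + of_int (a*b) * (of_int d * q3 y)^2"
      unfolding qnorm_def by (simp add: algebra_simps power2_eq_square)
    then show ?thesis using ci by (simp only: Ints_add Ints_diff Ints_mult Ints_of_int Ints_power)
  qed
  then show ?thesis using d(1) by (intro exI[of _ "d*d"]) auto
qed

lemma norm_int:
  assumes "is_order a b Ord" "x \<in> Ord" shows "qnorm a b x \<in> \<int>"
proof -
  have cl: "\<forall>x\<in>Ord. \<forall>y\<in>Ord. qmul a b x y \<in> Ord" "qone \<in> Ord" "full_lattice Ord"
    using assms(1) unfolding is_order_def by auto
  obtain D where D: "D > 0" "\<forall>y\<in>Ord. of_int D * qnorm a b y \<in> \<int>"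
    using lattice_norm_bound[OF cl(3)] by blast
  define pw where "pw k = (qmul a b x ^^ k) qone" for k
  have pwO: "pw k \<in> Ord" for k
    by (induction k) (simp_all add: pw_def cl assms(2))
  have pwN: "qnorm a b (pw k) = qnorm a b x ^ k" for k
    by (induction k) (simp_all add: pw_def qnorm_mul)
  show ?thesis using int_of_pow[OF D(1)] D(2) pwO pwN by metis
qed

lemma unit_in: "u \<in> qunits a b Ord \<Longrightarrow> u \<in> Ord" by (simp add: qunits_def)

lemma unit_inv: assumes "u \<in> qunits a b Ord"
  shows "\<exists>v\<in>qunits a b Ord. qmul a b u v = qone \<and> qmul a b v u = qone"
  using assms unfolding qunits_def by blast

lemma unit_one: "is_order a b Ord \<Longrightarrow> qone \<in> qunits a b Ord"
  unfolding qunits_def is_order_def by (intro CollectI conjI bexI[of _ qone]) auto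

lemma order_mul: "is_order a b Ord \<Longrightarrow> x \<in> Ord \<Longrightarrow> y \<in> Ord \<Longrightarrow> qmul a b x y \<in> Ord"
  unfolding is_order_def by blast

lemma unit_mul: assumes o: "is_order a b Ord" and u: "u \<in> qunits a b Ord" and v: "v \<in> qunits a b Ord"
  shows "qmul a b u v \<in> qunits a b Ord"
proof -
  obtain u' where u': "u' \<in> Ord" "qmul a b u u' = qone" "qmul a b u' u = qone" using u unfolding qunits_def by blast
  obtain v' where v': "v' \<in> Ord" "qmul a b v v' = qone" "qmul a b v' v = qone" using v unfolding qunits_def by blast
  have "qmul a b (qmul a b u v) (qmul a b v' u') = qmul a b u (qmul a b (qmul a b v v') u')"
    by (simp only: qmul_assoc)
  then have 1: "qmul a b (qmul a b u v) (qmul a b v' u') = qone" by (simp add: v' u')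
  have "qmul a b (qmul a b v' u') (qmul a b u v) = qmul a b v' (qmul a b (qmul a b u' u) v)"
    by (simp only: qmul_assoc)
  then have 2: "qmul a b (qmul a b v' u') (qmul a b u v) = qone" by (simp add: v' u')
  note 1 2
  moreover
  moreover have "qmul a b v' u' \<in> Ord" "qmul a b u v \<in> Ord"
    using o u' v' u v by (auto intro: order_mul unit_in)
  ultimately show ?thesis unfolding qunits_def by blast
qed

lemma norm_nat: assumes "is_order a b Ord" "a < 0" "b < 0" "x \<in> Ord"
  shows "\<exists>k. qnorm a b x = of_nat k"
proof -
  obtain z where z: "qnorm a b x = of_int z" using norm_int[OF assms(1,4)] Ints_cases by metis
  have "z \<ge> 0" using qnorm_nonneg[OF assms(2,3), of x] z by simp
  then show ?thesis using z by (intro exI[of _ "nat z"]) simp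
qed

lemma unit_norm: assumes o: "is_order a b Ord" and ab: "a < 0" "b < 0" and u: "u \<in> qunits a b Ord"
  shows "qnorm a b u = 1"
proof -
  obtain v where v: "v \<in> Ord" "qmul a b u v = qone" using u unfolding qunits_def by blast
  obtain i where i: "qnorm a b u = of_nat i" using norm_nat[OF o ab unit_in[OF u]] by blast
  obtain j where j: "qnorm a b v = of_nat j" using norm_nat[OF o ab v(1)] by blast
  have "qnorm a b u * qnorm a b v = 1" using qnorm_mul[of a b u v] v(2) by simp
  then have "i * j = 1" using i j by (metis of_nat_1 of_nat_eq_iff of_nat_mult)
  then show ?thesis using i by simp
qed

lemma unit_cancel: assumes ab: "a < 0" "b < 0" and x: "x \<noteq> 0" and e: "qmul a b x u = qmul a b x u'"
  shows "u = u'"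
proof -
  have n: "qnorm a b x \<noteq> 0" using qnorm_eq0[OF ab] x by blast
  have "qmul a b (qconj x) (qmul a b x u) = qmul a b (qconj x) (qmul a b x u')" using e by simp
  then have "qsc (qnorm a b x) u = qsc (qnorm a b x) u'"
    by (simp flip: qmul_assoc add: mul_conj qof_mul)
  then have "qsc (1 / qnorm a b x) (qsc (qnorm a b x) u) = qsc (1 / qnorm a b x) (qsc (qnorm a b x) u')" by simp
  then show ?thesis using n by (simp add: qsc_qsc)
qed

lemma mmul_diag: "mmul a b (A,B,C,E) (\<alpha>,0,0,\<beta>) = (qmul a b A \<alpha>, qmul a b B \<beta>, qmul a b C \<alpha>, qmul a b E \<beta>)"
  by simp
lemma mmul_anti: "mmul a b (A,B,C,E) (0,\<alpha>,\<beta>,0) = (qmul a b B \<beta>, qmul a b A \<alpha>, qmul a b E \<beta>, qmul a b C \<alpha>)"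
  by simp

lemma mmul_assoc: "mmul a b (mmul a b X Y) Z = mmul a b X (mmul a b Y Z)"
  by (cases X; cases Y; cases Z) (simp add: qmul_add_left qmul_add_right qmul_assoc add_ac)

lemma mone_eq: "mone = (qone, 0, 0, qone)" by (simp add: mone_def mscalar_def qof_one)

lemma mmul_mone: "mmul a b g mone = g" by (cases g) (simp add: mone_eq)

lemma mone_Gamma: "is_order a b Ord \<Longrightarrow> mone \<in> Gamma1 a b Ord"
  unfolding Gamma1_def Gamma1_diag_def mone_eq using unit_one by blast

lemma Gamma1_cases:
  assumes "\<gamma> \<in> Gamma1 a b Ord"
  obtains \<alpha> \<beta> where "\<alpha> \<in> qunits a b Ord" "\<beta> \<in> qunits a b Ord" "\<gamma> = (\<alpha>,0,0,\<beta>)"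
  | \<alpha> \<beta> where "\<alpha> \<in> qunits a b Ord" "\<beta> \<in> qunits a b Ord" "\<gamma> = (0,\<alpha>,\<beta>,0)"
  using assms unfolding Gamma1_def Gamma1_diag_def Gamma1_antidiag_def by blast

lemma Gamma1_mul: assumes o: "is_order a b Ord" and g: "\<gamma> \<in> Gamma1 a b Ord" and h: "\<delta> \<in> Gamma1 a b Ord"
  shows "mmul a b \<gamma> \<delta> \<in> Gamma1 a b Ord"
  using g
proof (cases rule: Gamma1_cases)
  case (1 \<alpha> \<beta>)
  from h show ?thesis
  proof (cases rule: Gamma1_cases)
    case (1 \<alpha>' \<beta>')
    then show ?thesis using \<open>\<gamma> = _\<close> \<open>\<alpha> \<in> _\<close> \<open>\<beta> \<in> _\<close> unit_mul[OF o]
      unfolding Gamma1_def Gamma1_diag_def by simp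
  next
    case (2 \<alpha>' \<beta>')
    then show ?thesis using \<open>\<gamma> = _\<close> \<open>\<alpha> \<in> _\<close> \<open>\<beta> \<in> _\<close> unit_mul[OF o]
      unfolding Gamma1_def Gamma1_antidiag_def by simp
  qed
next
  case (2 \<alpha> \<beta>)
  from h show ?thesis
  proof (cases rule: Gamma1_cases)
    case (1 \<alpha>' \<beta>')
    then show ?thesis using \<open>\<gamma> = _\<close> \<open>\<alpha> \<in> _\<close> \<open>\<beta> \<in> _\<close> unit_mul[OF o]
      unfolding Gamma1_def Gamma1_antidiag_def by simp
  next
    case (2 \<alpha>' \<beta>')
    then show ?thesis using \<open>\<gamma> = _\<close> \<open>\<alpha> \<in> _\<close> \<open>\<beta> \<in> _\<close> unit_mul[OF o]
      unfolding Gamma1_def Gamma1_diag_def by simp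
  qed
qed

lemma Gamma1_inv: assumes g: "\<gamma> \<in> Gamma1 a b Ord"
  shows "\<exists>\<gamma>'\<in>Gamma1 a b Ord. mmul a b \<gamma> \<gamma>' = mone"
  using g
proof (cases rule: Gamma1_cases)
  case (1 \<alpha> \<beta>)
  obtain \<alpha>' where a': "\<alpha>' \<in> qunits a b Ord" "qmul a b \<alpha> \<alpha>' = qone" using unit_inv[OF 1(1)] by blast
  obtain \<beta>' where b': "\<beta>' \<in> qunits a b Ord" "qmul a b \<beta> \<beta>' = qone" using unit_inv[OF 1(2)] by blast
  show ?thesis using a' b' 1(3) unfolding Gamma1_def Gamma1_diag_def mone_eq
    by (intro bexI[of _ "(\<alpha>',0,0,\<beta>')"]) auto
next
  case (2 \<alpha> \<beta>)
  obtain \<alpha>' where a': "\<alpha>' \<in> qunits a b Ord" "qmul a b \<alpha> \<alpha>' = qone" using unit_inv[OF 2(1)] by blast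
  obtain \<beta>' where b': "\<beta>' \<in> qunits a b Ord" "qmul a b \<beta> \<beta>' = qone" using unit_inv[OF 2(2)] by blast
  show ?thesis using a' b' 2(3) unfolding Gamma1_def Gamma1_antidiag_def mone_eq
    by (intro bexI[of _ "(0,\<beta>',\<alpha>',0)"]) auto
qed

lemma GU_iff: "(A,B,C,E) \<in> GU2_n a b n \<longleftrightarrow>
   qnorm a b A + qnorm a b B = of_nat n \<and> qnorm a b C + qnorm a b E = of_nat n \<and>
   qmul a b A (qconj C) + qmul a b B (qconj E) = 0"
proof -
  have c: "qmul a b C (qconj A) + qmul a b E (qconj B) = qconj (qmul a b A (qconj C) + qmul a b B (qconj E))"
    by (simp add: qconj_add qconj_mul)
  show ?thesis unfolding GU2_n_def mscalar_def
    by (simp add: mul_conj qof_add qof_inj c qconj_eq0) auto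
qed

lemma GU_props: assumes ab: "a < 0" "b < 0" and n: "n > 0" and g: "(A,B,C,E) \<in> GU2_n a b n"
  shows "qnorm a b C = qnorm a b B" "qnorm a b E = qnorm a b A"
    "qmul a b (qconj A) B + qmul a b (qconj C) E = 0"
proof -
  have e1: "qnorm a b A + qnorm a b B = of_nat n" and e2: "qnorm a b C + qnorm a b E = of_nat n"
    and e3: "qmul a b A (qconj C) + qmul a b B (qconj E) = 0" using g GU_iff by blast+
  have eq: "qmul a b A (qconj C) = - qmul a b B (qconj E)" using e3 by (simp only: eq_neg_iff_add_eq_0)
  have "qnorm a b (qmul a b A (qconj C)) = qnorm a b (- qmul a b B (qconj E))" by (simp only: eq)
  then have h: "qnorm a b A * qnorm a b C = qnorm a b B * qnorm a b E"
    by (simp only: qnorm_mul qnorm_neg qnorm_conj)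
  have "qnorm a b C * of_nat n = qnorm a b C * (qnorm a b A + qnorm a b B)" using e1 by simp
  also have "\<dots> = qnorm a b A * qnorm a b C + qnorm a b B * qnorm a b C" by (simp add: algebra_simps)
  also have "\<dots> = qnorm a b B * (qnorm a b C + qnorm a b E)" using h by (simp add: algebra_simps)
  also have "\<dots> = qnorm a b B * of_nat n" using e2 by simp
  finally have "qnorm a b C * of_nat n = qnorm a b B * of_nat n" .
  then show cb: "qnorm a b C = qnorm a b B" using n by simp
  then show ea: "qnorm a b E = qnorm a b A" using e1 e2 by simp
  show "qmul a b (qconj A) B + qmul a b (qconj C) E = 0"
  proof (cases "A = 0")
    case True
    then have "qnorm a b E = 0" using ea by simp
    then have "E = 0" using qnorm_eq0[OF ab] by blast
    then show ?thesis using True by simp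
  next
    case False
    let ?k = "qnorm a b A"
    have k: "?k \<noteq> 0" using False qnorm_eq0[OF ab] by blast
    have "qmul a b (qconj A) (qmul a b A (qconj C) + qmul a b B (qconj E)) = 0" using e3 by simp
    moreover have "qmul a b (qconj A) (qmul a b A (qconj C) + qmul a b B (qconj E)) =
       qmul a b (qmul a b (qconj A) A) (qconj C) + qmul a b (qmul a b (qconj A) B) (qconj E)"
      by (simp only: qmul_add_right qmul_assoc)
    ultimately have "qsc ?k (qconj C) + qmul a b (qmul a b (qconj A) B) (qconj E) = 0"
      by (simp only: mul_conj qof_mul)
    then have "qmul a b (qsc ?k (qconj C) + qmul a b (qmul a b (qconj A) B) (qconj E)) E = 0" by simp
    then have "qsc ?k (qmul a b (qconj C) E) + qsc ?k (qmul a b (qconj A) B) = 0"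
      using ea by (simp add: qmul_add_left qsc_mul qmul_assoc mul_conj qof_mul)
    then have "qsc ?k (qmul a b (qconj A) B + qmul a b (qconj C) E) = 0"
      by (simp add: qsc_add add.commute)
    then show ?thesis using qsc_eq0 k by blast
  qed
qed

lemma GU_inv: assumes ab: "a < 0" "b < 0" and n: "n > 0" and g: "g \<in> GU2_n a b n"
  shows "\<exists>h. mmul a b g h = mone \<and> mmul a b h g = mone"
proof -
  obtain A B C E where gg: "g = (A,B,C,E)" by (cases g) auto
  have e1: "qnorm a b A + qnorm a b B = of_nat n" and e2: "qnorm a b C + qnorm a b E = of_nat n"
    and e3: "qmul a b A (qconj C) + qmul a b B (qconj E) = 0" using g gg GU_iff by blast+
  note p = GU_props[OF ab n g[unfolded gg]]
  let ?c = "1 / (of_nat n :: rat)"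
  define h where "h = (qsc ?c (qconj A), qsc ?c (qconj C), qsc ?c (qconj B), qsc ?c (qconj E))"
  have e4: "qmul a b C (qconj A) + qmul a b E (qconj B) = 0"
    using e3 by (metis qconj_add qconj_mul qconj_conj qconj_zero)
  have e5: "qmul a b (qconj B) A + qmul a b (qconj E) C = 0"
    using p(3) by (metis qconj_add qconj_mul qconj_conj qconj_zero)
  have n0: "(of_nat n :: rat) \<noteq> 0" using n by simp
  have f: "?c * qnorm a b A + ?c * qnorm a b B = 1"
    "?c * qnorm a b C + ?c * qnorm a b E = 1"
    "?c * qnorm a b A + ?c * qnorm a b C = 1"
    "?c * qnorm a b B + ?c * qnorm a b E = 1"
  proof -
    have cn: "?c * of_nat n = 1" using n0 by simp
    have e6: "qnorm a b A + qnorm a b C = of_nat n" using e1 p(1) by simp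
    have e7: "qnorm a b B + qnorm a b E = of_nat n" using e2 p(1) by simp
    show "?c * qnorm a b A + ?c * qnorm a b B = 1"
      "?c * qnorm a b C + ?c * qnorm a b E = 1"
      "?c * qnorm a b A + ?c * qnorm a b C = 1"
      "?c * qnorm a b B + ?c * qnorm a b E = 1"
      by (simp only: distrib_left[symmetric] e1 e2 e6 e7 cn)+
  qed
  have "mmul a b g h = (qmul a b A (qsc ?c (qconj A)) + qmul a b B (qsc ?c (qconj B)),
     qmul a b A (qsc ?c (qconj C)) + qmul a b B (qsc ?c (qconj E)),
     qmul a b C (qsc ?c (qconj A)) + qmul a b E (qsc ?c (qconj B)),
     qmul a b C (qsc ?c (qconj C)) + qmul a b E (qsc ?c (qconj E)))"
    unfolding gg h_def by simp
  also have "\<dots> = mone" unfolding mone_eq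
    by (simp only: qsc_mul mul_conj qsc_qof qof_add f qof_one qsc_add[symmetric] e3 e4 qsc_zero)
  finally have m1: "mmul a b g h = mone" .
  have "mmul a b h g = (qmul a b (qsc ?c (qconj A)) A + qmul a b (qsc ?c (qconj C)) C,
     qmul a b (qsc ?c (qconj A)) B + qmul a b (qsc ?c (qconj C)) E,
     qmul a b (qsc ?c (qconj B)) A + qmul a b (qsc ?c (qconj E)) C,
     qmul a b (qsc ?c (qconj B)) B + qmul a b (qsc ?c (qconj E)) E)"
    unfolding gg h_def by simp
  also have "\<dots> = mone" unfolding mone_eq
    by (simp only: qsc_mul mul_conj qsc_qof qof_add f qof_one qsc_add[symmetric] p(3) e5 qsc_zero)
  finally have m2: "mmul a b h g = mone" .
  show ?thesis using m1 m2 by blast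
qed

lemma rep_sub: "unit_rep_system a b Ord k X \<Longrightarrow> x \<in> X \<Longrightarrow> x \<in> Ord \<and> qnorm a b x = of_nat k"
  unfolding unit_rep_system_def normset_def by blast

lemma rep_exists: "unit_rep_system a b Ord k X \<Longrightarrow> z \<in> Ord \<Longrightarrow> qnorm a b z = of_nat k \<Longrightarrow>
   \<exists>r\<in>X. \<exists>u\<in>qunits a b Ord. z = qmul a b r u"
  unfolding unit_rep_system_def normset_def by blast

lemma rep_unique: assumes o: "is_order a b Ord" and R: "unit_rep_system a b Ord k X"
  and x: "x \<in> X" and x': "x' \<in> X" and u: "u \<in> qunits a b Ord" and e: "x = qmul a b x' u"
  shows "x = x'"
proof -
  have "x \<in> normset a b Ord k" using R x unfolding unit_rep_system_def by blast
  then have "\<exists>!r\<in>X. \<exists>u\<in>qunits a b Ord. x = qmul a b r u" using R unfolding unit_rep_system_def by blast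
  moreover have "\<exists>u\<in>qunits a b Ord. x = qmul a b x u" using unit_one[OF o] by (intro bexI[of _ qone]) auto
  moreover have "\<exists>u\<in>qunits a b Ord. x = qmul a b x' u" using u e by blast
  ultimately show ?thesis using x x' by blast
qed

lemma unit_conj: assumes o: "is_order a b Ord" and ab: "a < 0" "b < 0" and u: "u \<in> qunits a b Ord"
  shows "qmul a b u (qconj u) = qone"
  using unit_norm[OF o ab u] by (simp add: mul_conj qof_one)

lemma cancel_mid: assumes "qmul a b u v = qone"
  shows "qmul a b (qmul a b A u) (qmul a b v Z) = qmul a b A Z"
proof -
  have "qmul a b (qmul a b A u) (qmul a b v Z) = qmul a b A (qmul a b (qmul a b u v) Z)"
    by (simp only: qmul_assoc)
  then show ?thesis using assms by simp
qed

lemma cancel_r: assumes "qmul a b u v = qone"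
  shows "qmul a b (qmul a b A u) v = A"
proof -
  have "qmul a b (qmul a b A u) v = qmul a b A (qmul a b u v)" by (simp only: qmul_assoc)
  then show ?thesis using assms by simp
qed

lemma Rset_mem: "(x, v, w, y) \<in> Rset a b Ord n xs k \<longleftrightarrow> x \<in> xs k \<and> y \<in> xs k \<and>
      v \<in> normset a b Ord (n - k) \<and> w \<in> normset a b Ord (n - k) \<and>
      qmul a b x (qconj w) + qmul a b v (qconj y) = 0"
  unfolding Rset_def by blast

lemma R_sub: assumes ab: "a < 0" "b < 0" and n: "n > 0" and kn: "k \<le> n"
  and xsr: "\<forall>k. unit_rep_system a b Ord k (xs k)"
  and r: "r \<in> Rset a b Ord n xs k"
  shows "r \<in> GU2_n a b n \<inter> M2O_units a b Ord"
proof -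
  obtain x v w y where rr: "r = (x,v,w,y)" by (cases r) auto
  have m: "x \<in> xs k" "y \<in> xs k" "v \<in> normset a b Ord (n - k)" "w \<in> normset a b Ord (n - k)"
    "qmul a b x (qconj w) + qmul a b v (qconj y) = 0" using r rr Rset_mem by blast+
  have x: "x \<in> Ord" "qnorm a b x = of_nat k" using rep_sub xsr m(1) by blast+
  have y: "y \<in> Ord" "qnorm a b y = of_nat k" using rep_sub xsr m(2) by blast+
  have v: "v \<in> Ord" "qnorm a b v = of_nat (n - k)" using m(3) unfolding normset_def by blast+
  have w: "w \<in> Ord" "qnorm a b w = of_nat (n - k)" using m(4) unfolding normset_def by blast+
  have g: "r \<in> GU2_n a b n" unfolding rr GU_iff using x y v w m(5) kn by (simp add: of_nat_diff)
  obtain h where "mmul a b r h = mone \<and> mmul a b h r = mone" using GU_inv[OF ab n g] by blast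
  then have "r \<in> M2O_units a b Ord" unfolding rr M2O_units_def using x y v w by blast
  then show ?thesis using g by blast
qed

lemma R_norm: assumes r: "(x,v,w,y) \<in> Rset a b Ord n xs k" and xsr: "\<forall>k. unit_rep_system a b Ord k (xs k)"
  shows "qnorm a b x = of_nat k \<and> qnorm a b v = of_nat (n - k)"
proof -
  have "x \<in> xs k" "v \<in> normset a b Ord (n - k)" using r unfolding Rset_mem by blast+
  then show ?thesis using rep_sub[OF xsr[rule_format, of k]] unfolding normset_def by blast
qed

lemma orbit_diag:
  assumes o: "is_order a b Ord" and ab: "a < 0" "b < 0"
  and xsr: "\<forall>k. unit_rep_system a b Ord k (xs k)"
  and r1: "r1 \<in> Rset a b Ord n xs k1" and r2: "r2 \<in> Rset a b Ord n xs k2" and k1: "k1 \<ge> 1"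
  and \<alpha>: "\<alpha> \<in> qunits a b Ord" and \<beta>: "\<beta> \<in> qunits a b Ord"
  and e: "r2 = mmul a b r1 (\<alpha>,0,0,\<beta>)"
  shows "r1 = r2"
proof -
  obtain x1 v1 w1 y1 where rr1: "r1 = (x1,v1,w1,y1)" by (cases r1) auto
  obtain x2 v2 w2 y2 where rr2: "r2 = (x2,v2,w2,y2)" by (cases r2) auto
  have ee: "x2 = qmul a b x1 \<alpha>" "v2 = qmul a b v1 \<beta>" "w2 = qmul a b w1 \<alpha>" "y2 = qmul a b y1 \<beta>"
    using e rr1 rr2 by simp_all
  have m1: "x1 \<in> xs k1" "y1 \<in> xs k1" using r1 rr1 Rset_mem by blast+
  have m2: "x2 \<in> xs k2" "y2 \<in> xs k2" using r2 rr2 Rset_mem by blast+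
  have n1: "qnorm a b x1 = of_nat k1" using rep_sub xsr m1(1) by blast
  have n2: "qnorm a b x2 = of_nat k2" using rep_sub xsr m2(1) by blast
  have "qnorm a b x2 = qnorm a b x1" using ee(1) qnorm_mul unit_norm[OF o ab \<alpha>] by simp
  then have kk: "k2 = k1" using n1 n2 by simp
  have xx: "x2 = x1" using rep_unique[OF o xsr[rule_format, of k1] _ _ \<alpha> ee(1)] m1 m2 kk by blast
  have yy: "y2 = y1" using rep_unique[OF o xsr[rule_format, of k1] _ _ \<beta> ee(4)] m1 m2 kk by blast
  have x10: "x1 \<noteq> 0" using n1 k1 by auto
  have "qnorm a b y1 = of_nat k1" using rep_sub xsr m1(2) by blast
  then have y10: "y1 \<noteq> 0" using k1 by auto
  have "\<alpha> = qone" using unit_cancel[OF ab x10, of \<alpha> qone] ee(1) xx by simp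
  moreover have "\<beta> = qone" using unit_cancel[OF ab y10, of \<beta> qone] ee(4) yy by simp
  ultimately show ?thesis using rr1 rr2 ee xx yy by simp
qed

lemma orbit_anti:
  assumes xsr: "\<forall>k. unit_rep_system a b Ord k (xs k)" and o: "is_order a b Ord" and ab: "a < 0" "b < 0"
  and r1: "r1 \<in> Rset a b Ord n xs k1" and r2: "r2 \<in> Rset a b Ord n xs k2"
  and \<beta>: "\<beta> \<in> qunits a b Ord"
  and e: "r2 = mmul a b r1 (0,\<alpha>,\<beta>,0)"
  shows "k2 = n - k1"
proof -
  obtain x1 v1 w1 y1 where rr1: "r1 = (x1,v1,w1,y1)" by (cases r1) auto
  obtain x2 v2 w2 y2 where rr2: "r2 = (x2,v2,w2,y2)" by (cases r2) auto
  have ee: "x2 = qmul a b v1 \<beta>" using e rr1 rr2 by simp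
  have "qnorm a b v1 = of_nat (n - k1)" using R_norm r1 rr1 xsr by blast
  moreover have "qnorm a b x2 = of_nat k2" using R_norm r2 rr2 xsr by blast
  moreover have "qnorm a b x2 = qnorm a b v1" using ee qnorm_mul unit_norm[OF o ab \<beta>] by simp
  ultimately show ?thesis by simp
qed

lemma orbit_delta:
  assumes o: "is_order a b Ord" and g1: "\<gamma>1 \<in> Gamma1 a b Ord" and g2: "\<gamma>2 \<in> Gamma1 a b Ord"
  and e: "mmul a b r1 \<gamma>1 = mmul a b r2 \<gamma>2"
  shows "\<exists>\<delta>\<in>Gamma1 a b Ord. r2 = mmul a b r1 \<delta>"
proof -
  obtain \<gamma>' where g': "\<gamma>' \<in> Gamma1 a b Ord" "mmul a b \<gamma>2 \<gamma>' = mone" using Gamma1_inv[OF g2] by blast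
  have "r2 = mmul a b r2 (mmul a b \<gamma>2 \<gamma>')" using g' by (simp add: mmul_mone)
  also have "\<dots> = mmul a b (mmul a b r2 \<gamma>2) \<gamma>'" by (simp only: mmul_assoc)
  also have "\<dots> = mmul a b (mmul a b r1 \<gamma>1) \<gamma>'" by (simp only: e)
  also have "\<dots> = mmul a b r1 (mmul a b \<gamma>1 \<gamma>')" by (simp only: mmul_assoc)
  finally show ?thesis using Gamma1_mul[OF o g1 g'(1)] by blast
qed

lemma orbit:
  assumes o: "is_order a b Ord" and ab: "a < 0" "b < 0"
  and xsr: "\<forall>k. unit_rep_system a b Ord k (xs k)"
  and r1: "r1 \<in> Rset a b Ord n xs k1" and r2: "r2 \<in> Rset a b Ord n xs k2" and k1: "k1 \<ge> 1"
  and \<delta>: "\<delta> \<in> Gamma1 a b Ord" and e: "r2 = mmul a b r1 \<delta>"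
  shows "r1 = r2 \<or> k2 = n - k1"
  using \<delta>
proof (cases rule: Gamma1_cases)
  case (1 \<alpha> \<beta>)
  then show ?thesis using orbit_diag[OF o ab xsr r1 r2 k1] e by blast
next
  case (2 \<alpha> \<beta>)
  then show ?thesis using orbit_anti[OF xsr o ab r1 r2] e by blast
qed

lemma ex_main:
  assumes o: "is_order a b Ord" and ab: "a < 0" "b < 0" and n: "n > 0"
  and xsr: "\<forall>k. unit_rep_system a b Ord k (xs k)"
  and g: "(A,B,C,E) \<in> GU2_n a b n" and ord: "A \<in> Ord" "B \<in> Ord" "C \<in> Ord" "E \<in> Ord"
  and kA: "qnorm a b A = of_nat k" and kn: "k \<le> n"
  shows "\<exists>r\<in>Rset a b Ord n xs k. \<exists>\<gamma>\<in>Gamma1 a b Ord. (A,B,C,E) = mmul a b r \<gamma>"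
proof -
  have e1: "qnorm a b A + qnorm a b B = of_nat n" and e2: "qnorm a b C + qnorm a b E = of_nat n"
    and e3: "qmul a b A (qconj C) + qmul a b B (qconj E) = 0" using g GU_iff by blast+
  note p = GU_props[OF ab n g]
  have nB: "qnorm a b B = of_nat (n - k)" using e1 kA kn by (simp add: of_nat_diff)
  have nC: "qnorm a b C = of_nat (n - k)" using p(1) nB by simp
  have nE: "qnorm a b E = of_nat k" using p(2) kA by simp
  obtain x u where x: "x \<in> xs k" "u \<in> qunits a b Ord" "A = qmul a b x u"
    using rep_exists[OF xsr[rule_format] ord(1) kA] by blast
  obtain y u' where y: "y \<in> xs k" "u' \<in> qunits a b Ord" "E = qmul a b y u'"
    using rep_exists[OF xsr[rule_format] ord(4) nE] by blast
  obtain \<alpha> where \<alpha>: "\<alpha> \<in> qunits a b Ord" "qmul a b u \<alpha> = qone" "qmul a b \<alpha> u = qone"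
    using unit_inv[OF x(2)] by blast
  obtain \<beta> where \<beta>: "\<beta> \<in> qunits a b Ord" "qmul a b u' \<beta> = qone" "qmul a b \<beta> u' = qone"
    using unit_inv[OF y(2)] by blast
  have xA: "x = qmul a b A \<alpha>" using x(3) cancel_r[OF \<alpha>(2)] by simp
  have yE: "y = qmul a b E \<beta>" using y(3) cancel_r[OF \<beta>(2)] by simp
  define r where "r = (x, qmul a b B \<beta>, qmul a b C \<alpha>, y)"
  have v: "qmul a b B \<beta> \<in> normset a b Ord (n - k)"
    unfolding normset_def using order_mul[OF o ord(2) unit_in[OF \<beta>(1)]] qnorm_mul unit_norm[OF o ab \<beta>(1)] nB
    by simp
  have w: "qmul a b C \<alpha> \<in> normset a b Ord (n - k)"
    unfolding normset_def using order_mul[OF o ord(3) unit_in[OF \<alpha>(1)]] qnorm_mul unit_norm[OF o ab \<alpha>(1)] nC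
    by simp
  have c1: "qmul a b x (qconj (qmul a b C \<alpha>)) = qmul a b A (qconj C)"
    unfolding xA qconj_mul using cancel_mid[OF unit_conj[OF o ab \<alpha>(1)]] by simp
  have c2: "qmul a b (qmul a b B \<beta>) (qconj y) = qmul a b B (qconj E)"
    unfolding yE qconj_mul using cancel_mid[OF unit_conj[OF o ab \<beta>(1)]] by simp
  have rR: "r \<in> Rset a b Ord n xs k" unfolding r_def Rset_mem using x(1) y(1) v w c1 c2 e3 by simp
  have "mmul a b r (u,0,0,u') = (qmul a b x u, qmul a b (qmul a b B \<beta>) u', qmul a b (qmul a b C \<alpha>) u, qmul a b y u')"
    unfolding r_def by simp
  also have "\<dots> = (A,B,C,E)" using x(3) y(3) cancel_r[OF \<beta>(3)] cancel_r[OF \<alpha>(3)] by simp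
  finally have "(A,B,C,E) = mmul a b r (u,0,0,u')" by simp
  moreover have "(u,0,0,u') \<in> Gamma1 a b Ord" unfolding Gamma1_def Gamma1_diag_def using x(2) y(2) by blast
  ultimately show ?thesis using rR by blast
qed

lemma ex_all:
  assumes o: "is_order a b Ord" and ab: "a < 0" "b < 0" and n: "n > 0"
  and xsr: "\<forall>k. unit_rep_system a b Ord k (xs k)"
  and g: "g \<in> GU2_n a b n \<inter> M2O_units a b Ord"
  shows "\<exists>k. n \<le> 2 * k \<and> k \<le> n \<and> (\<exists>r\<in>Rset a b Ord n xs k. \<exists>\<gamma>\<in>Gamma1 a b Ord. g = mmul a b r \<gamma>)"
proof -
  obtain A B C E where gg: "g = (A,B,C,E)" by (cases g) auto
  have ord: "A \<in> Ord" "B \<in> Ord" "C \<in> Ord" "E \<in> Ord" using g gg unfolding M2O_units_def by blast+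
  have gu: "(A,B,C,E) \<in> GU2_n a b n" using g gg by blast
  have e1: "qnorm a b A + qnorm a b B = of_nat n" and e2: "qnorm a b C + qnorm a b E = of_nat n"
    and e3: "qmul a b A (qconj C) + qmul a b B (qconj E) = 0" using gu GU_iff by blast+
  note p = GU_props[OF ab n gu]
  obtain k where kA: "qnorm a b A = of_nat k" using norm_nat[OF o ab ord(1)] by blast
  have "0 \<le> qnorm a b B" using qnorm_nonneg[OF ab] by blast
  then have kn: "k \<le> n" using e1 kA by simp
  show ?thesis
  proof (cases "n \<le> 2 * k")
    case True
    then show ?thesis using ex_main[OF o ab n xsr gu ord kA kn] gg kn by blast
  next
    case False
    have gu': "(B,A,E,C) \<in> GU2_n a b n" unfolding GU_iff using e1 e2 e3 by (simp add: add.commute)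
    have kB: "qnorm a b B = of_nat (n - k)" using e1 kA kn by (simp add: of_nat_diff)
    obtain r \<gamma> where r: "r \<in> Rset a b Ord n xs (n - k)" "\<gamma> \<in> Gamma1 a b Ord" "(B,A,E,C) = mmul a b r \<gamma>"
      using ex_main[OF o ab n xsr gu' ord(2,1,4,3) kB] by auto
    define J where "J = (0::quat, qone, qone, 0::quat)"
    have J: "J \<in> Gamma1 a b Ord" unfolding J_def Gamma1_def Gamma1_antidiag_def using unit_one[OF o] by blast
    have "g = mmul a b (B,A,E,C) J" unfolding gg J_def by simp
    also have "\<dots> = mmul a b r (mmul a b \<gamma> J)" using r(3) by (simp only: mmul_assoc)
    finally show ?thesis using False Gamma1_mul[OF o r(2) J] r(1) by (intro exI[of _ "n - k"]) auto
  qed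
qed


lemma bex1I': "(\<exists>x\<in>S. P x) \<Longrightarrow> (\<And>x y. x \<in> S \<Longrightarrow> y \<in> S \<Longrightarrow> P x \<Longrightarrow> P y \<Longrightarrow> x = y) \<Longrightarrow> \<exists>!x\<in>S. P x"
  by blast

theorem corollary5p14:
  fixes a b p :: int and Ord :: "quat set" and n :: nat and xs :: "nat \<Rightarrow> quat set"
  assumes "prime p"
    and "ramified_exactly_at_p_inf p a b"
    and "maximal_order a b Ord"
    and "n \<ge> 1"
    and "\<forall>k. unit_rep_system a b Ord k (xs k)"
  shows "(odd n \<longrightarrow>
            coset_reps a b Ord n (\<Union>k\<in>{n div 2 + 1..n}. Rset a b Ord n xs k))
       \<and> (even n \<longrightarrow>
            (\<forall>x v w y r'. (x, v, w, y) \<in> Rset a b Ord n xs (n div 2) \<longrightarrow>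
                r' \<in> Rset a b Ord n xs (n div 2) \<longrightarrow> r' \<noteq> (x, v, w, y) \<longrightarrow>
                (\<exists>\<gamma>\<in>Gamma1_antidiag a b Ord. r' = mmul a b (x, v, w, y) \<gamma>) \<longrightarrow>
                (\<exists>s\<in>xs (n div 2). \<exists>t\<in>xs (n div 2).
                   (\<exists>u\<in>qunits a b Ord. v = qmul a b s u) \<and>
                   (\<exists>u\<in>qunits a b Ord. w = qmul a b t u) \<and>
                   r' = (s,
                         qsc (1 / of_nat (n div 2)) (qmul a b (qmul a b x (qconj w)) t),
                         qsc (1 / of_nat (n div 2)) (qmul a b (qmul a b y (qconj v)) s),
                         t)))
          \<and> (\<forall>R'. R' \<subseteq> Rset a b Ord n xs (n div 2) \<and>
                 (\<forall>r\<in>Rset a b Ord n xs (n div 2). \<exists>!r'\<in>R'. \<exists>\<gamma>\<in>Gamma1 a b Ord. r = mmul a b r' \<gamma>)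
               \<longrightarrow> coset_reps a b Ord n
                     ((\<Union>k\<in>{n div 2 + 1..n}. Rset a b Ord n xs k) \<union> R')))"
proof -
  have ab: "a < 0" "b < 0" using assms(2) unfolding ramified_exactly_at_p_inf_def by blast+
  have o: "is_order a b Ord" using assms(3) unfolding maximal_order_def by blast
  have n: "n > 0" using assms(4) by simp
  note xsr = assms(5)
  let ?G = "GU2_n a b n \<inter> M2O_units a b Ord"
  let ?U = "\<Union>k\<in>{n div 2 + 1..n}. Rset a b Ord n xs k"
  have Usub: "?U \<subseteq> ?G" using R_sub[OF ab n _ xsr] by auto
  have odd_part: "coset_reps a b Ord n ?U" if od: "odd n"
    unfolding coset_reps_def
  proof (intro conjI ballI Usub bex1I')
    fix g assume g: "g \<in> ?G"
    obtain k r \<gamma> where k: "n \<le> 2 * k" "k \<le> n" "r \<in> Rset a b Ord n xs k" "\<gamma> \<in> Gamma1 a b Ord" "g = mmul a b r \<gamma>"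
      using ex_all[OF o ab n xsr g] by blast
    have "k \<in> {n div 2 + 1..n}" using k(1,2) od by (auto; presburger)
    then show "\<exists>r\<in>?U. \<exists>\<gamma>\<in>Gamma1 a b Ord. g = mmul a b r \<gamma>" using k by blast
  next
    fix g r1 r2 assume "r1 \<in> ?U" "r2 \<in> ?U"
      and g1: "\<exists>\<gamma>\<in>Gamma1 a b Ord. g = mmul a b r1 \<gamma>" and g2: "\<exists>\<gamma>\<in>Gamma1 a b Ord. g = mmul a b r2 \<gamma>"
    then obtain k1 k2 where k: "k1 \<in> {n div 2 + 1..n}" "k2 \<in> {n div 2 + 1..n}"
      "r1 \<in> Rset a b Ord n xs k1" "r2 \<in> Rset a b Ord n xs k2" by blast
    obtain \<gamma>1 \<gamma>2 where "\<gamma>1 \<in> Gamma1 a b Ord" "\<gamma>2 \<in> Gamma1 a b Ord" "mmul a b r1 \<gamma>1 = mmul a b r2 \<gamma>2"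
      using g1 g2 by metis
    then obtain \<delta> where \<delta>: "\<delta> \<in> Gamma1 a b Ord" "r2 = mmul a b r1 \<delta>" using orbit_delta[OF o] by blast
    have "k1 \<ge> 1" using k(1) by auto
    then have "r1 = r2 \<or> k2 = n - k1" using orbit[OF o ab xsr k(3,4) _ \<delta>] by blast
    moreover have "k2 \<noteq> n - k1" using k(1,2) od by (auto; presburger)
    ultimately show "r1 = r2" by blast
  qed
  have even_part1: "\<forall>x v w y r'. (x, v, w, y) \<in> Rset a b Ord n xs (n div 2) \<longrightarrow>
                r' \<in> Rset a b Ord n xs (n div 2) \<longrightarrow> r' \<noteq> (x, v, w, y) \<longrightarrow>
                (\<exists>\<gamma>\<in>Gamma1_antidiag a b Ord. r' = mmul a b (x, v, w, y) \<gamma>) \<longrightarrow>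
                (\<exists>s\<in>xs (n div 2). \<exists>t\<in>xs (n div 2).
                   (\<exists>u\<in>qunits a b Ord. v = qmul a b s u) \<and>
                   (\<exists>u\<in>qunits a b Ord. w = qmul a b t u) \<and>
                   r' = (s,
                         qsc (1 / of_nat (n div 2)) (qmul a b (qmul a b x (qconj w)) t),
                         qsc (1 / of_nat (n div 2)) (qmul a b (qmul a b y (qconj v)) s),
                         t))" if ev: "even n"
  proof (intro allI impI)
    fix x v w y r'
    let ?m = "n div 2"
    assume r: "(x, v, w, y) \<in> Rset a b Ord n xs ?m" and r': "r' \<in> Rset a b Ord n xs ?m"
      and "\<exists>\<gamma>\<in>Gamma1_antidiag a b Ord. r' = mmul a b (x, v, w, y) \<gamma>"
    then obtain \<alpha> \<beta> where \<alpha>: "\<alpha> \<in> qunits a b Ord" and \<beta>: "\<beta> \<in> qunits a b Ord"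
      and e: "r' = (qmul a b v \<beta>, qmul a b x \<alpha>, qmul a b y \<beta>, qmul a b w \<alpha>)"
      unfolding Gamma1_antidiag_def by auto
    have nm: "n - ?m = ?m" using ev by auto
    have m0: "(of_nat ?m :: rat) \<noteq> 0" using ev n by auto
    have st: "qmul a b v \<beta> \<in> xs ?m" "qmul a b w \<alpha> \<in> xs ?m" using r' e Rset_mem by blast+
    have nv: "qnorm a b v = of_nat ?m" using R_norm[OF r xsr] nm by simp
    have nw: "qnorm a b w = of_nat ?m" using r nm unfolding Rset_mem normset_def by simp
    obtain \<alpha>' where \<alpha>': "\<alpha>' \<in> qunits a b Ord" "qmul a b \<alpha> \<alpha>' = qone" using unit_inv[OF \<alpha>] by blast
    obtain \<beta>' where \<beta>': "\<beta>' \<in> qunits a b Ord" "qmul a b \<beta> \<beta>' = qone" using unit_inv[OF \<beta>] by blast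
    have vv: "v = qmul a b (qmul a b v \<beta>) \<beta>'" using cancel_r[OF \<beta>'(2)] by simp
    have ww: "w = qmul a b (qmul a b w \<alpha>) \<alpha>'" using cancel_r[OF \<alpha>'(2)] by simp
    have "qmul a b (qmul a b x (qconj w)) (qmul a b w \<alpha>) = qmul a b x (qmul a b (qmul a b (qconj w) w) \<alpha>)"
      by (simp only: qmul_assoc)
    also have "\<dots> = qsc (of_nat ?m) (qmul a b x \<alpha>)" by (simp add: mul_conj qof_mul qsc_mul nw)
    finally have c1: "qsc (1 / of_nat ?m) (qmul a b (qmul a b x (qconj w)) (qmul a b w \<alpha>)) = qmul a b x \<alpha>"
      using m0 by (simp add: qsc_qsc)
    have "qmul a b (qmul a b y (qconj v)) (qmul a b v \<beta>) = qmul a b y (qmul a b (qmul a b (qconj v) v) \<beta>)"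
      by (simp only: qmul_assoc)
    also have "\<dots> = qsc (of_nat ?m) (qmul a b y \<beta>)" by (simp add: mul_conj qof_mul qsc_mul nv)
    finally have c2: "qsc (1 / of_nat ?m) (qmul a b (qmul a b y (qconj v)) (qmul a b v \<beta>)) = qmul a b y \<beta>"
      using m0 by (simp add: qsc_qsc)
    show "\<exists>s\<in>xs ?m. \<exists>t\<in>xs ?m.
                   (\<exists>u\<in>qunits a b Ord. v = qmul a b s u) \<and>
                   (\<exists>u\<in>qunits a b Ord. w = qmul a b t u) \<and>
                   r' = (s,
                         qsc (1 / of_nat ?m) (qmul a b (qmul a b x (qconj w)) t),
                         qsc (1 / of_nat ?m) (qmul a b (qmul a b y (qconj v)) s),
                         t)"
    proof -
      have "(\<exists>u\<in>qunits a b Ord. v = qmul a b (qmul a b v \<beta>) u) \<and>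
                   (\<exists>u\<in>qunits a b Ord. w = qmul a b (qmul a b w \<alpha>) u) \<and>
                   r' = (qmul a b v \<beta>,
                         qsc (1 / of_nat ?m) (qmul a b (qmul a b x (qconj w)) (qmul a b w \<alpha>)),
                         qsc (1 / of_nat ?m) (qmul a b (qmul a b y (qconj v)) (qmul a b v \<beta>)),
                         qmul a b w \<alpha>)"
      proof (intro conjI)
        show "\<exists>u\<in>qunits a b Ord. v = qmul a b (qmul a b v \<beta>) u" using vv \<beta>'(1) by blast
        show "\<exists>u\<in>qunits a b Ord. w = qmul a b (qmul a b w \<alpha>) u" using ww \<alpha>'(1) by blast
      qed (simp only: c1 c2 e)
      then show ?thesis using st by blast
    qed
  qed
  have even_part2: "coset_reps a b Ord n (?U \<union> R')"
    if ev: "even n" and R'1: "R' \<subseteq> Rset a b Ord n xs (n div 2)"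
      and R'2: "\<forall>r\<in>Rset a b Ord n xs (n div 2). \<exists>!r'\<in>R'. \<exists>\<gamma>\<in>Gamma1 a b Ord. r = mmul a b r' \<gamma>" for R'
  proof -
    let ?m = "n div 2"
    have m1: "?m \<ge> 1" using ev n by auto
    have Rsub: "R' \<subseteq> ?G" using R'1 R_sub[OF ab n _ xsr, of ?m] by auto
    have cls: "\<exists>k. r \<in> Rset a b Ord n xs k \<and> ?m \<le> k \<and> k \<le> n \<and> (k = ?m \<longrightarrow> r \<in> R')"
      if "r \<in> ?U \<union> R'" for r
      using that R'1 by auto
    show ?thesis
      unfolding coset_reps_def
    proof (intro conjI ballI bex1I')
      show "?U \<union> R' \<subseteq> ?G" using Usub Rsub by blast
    next
      fix g assume g: "g \<in> ?G"
      obtain k r \<gamma> where k: "n \<le> 2 * k" "k \<le> n" "r \<in> Rset a b Ord n xs k" "\<gamma> \<in> Gamma1 a b Ord" "g = mmul a b r \<gamma>"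
        using ex_all[OF o ab n xsr g] by blast
      show "\<exists>r\<in>?U \<union> R'. \<exists>\<gamma>\<in>Gamma1 a b Ord. g = mmul a b r \<gamma>"
      proof (cases "k = ?m")
        case False
        then have "k \<in> {n div 2 + 1..n}" using k(1,2) ev by auto
        then show ?thesis using k by blast
      next
        case True
        then obtain r' \<gamma>' where r': "r' \<in> R'" "\<gamma>' \<in> Gamma1 a b Ord" "r = mmul a b r' \<gamma>'"
          using R'2 k(3) by blast
        have "g = mmul a b r' (mmul a b \<gamma>' \<gamma>)" using k(5) r'(3) by (simp only: mmul_assoc)
        then show ?thesis using r' Gamma1_mul[OF o r'(2) k(4)] by blast
      qed
    next
      fix g r1 r2 assume r1: "r1 \<in> ?U \<union> R'" and r2: "r2 \<in> ?U \<union> R'"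
        and g1: "\<exists>\<gamma>\<in>Gamma1 a b Ord. g = mmul a b r1 \<gamma>" and g2: "\<exists>\<gamma>\<in>Gamma1 a b Ord. g = mmul a b r2 \<gamma>"
      obtain k1 where k1: "r1 \<in> Rset a b Ord n xs k1" "?m \<le> k1" "k1 \<le> n" "k1 = ?m \<longrightarrow> r1 \<in> R'"
        using cls[OF r1] by blast
      obtain k2 where k2: "r2 \<in> Rset a b Ord n xs k2" "?m \<le> k2" "k2 \<le> n" "k2 = ?m \<longrightarrow> r2 \<in> R'"
        using cls[OF r2] by blast
      obtain \<gamma>1 \<gamma>2 where "\<gamma>1 \<in> Gamma1 a b Ord" "\<gamma>2 \<in> Gamma1 a b Ord" "mmul a b r1 \<gamma>1 = mmul a b r2 \<gamma>2"
        using g1 g2 by metis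
      then obtain \<delta> where \<delta>: "\<delta> \<in> Gamma1 a b Ord" "r2 = mmul a b r1 \<delta>" using orbit_delta[OF o] by blast
      have "k1 \<ge> 1" using k1(2) m1 by linarith
      then have "r1 = r2 \<or> k2 = n - k1" using orbit[OF o ab xsr k1(1) k2(1) _ \<delta>] by blast
      then show "r1 = r2"
      proof
        assume kk: "k2 = n - k1"
        then have "k1 = ?m" "k2 = ?m" using k1(2,3) k2(2) ev by auto
        then have in': "r1 \<in> R'" "r2 \<in> R'" "r2 \<in> Rset a b Ord n xs ?m" using k1 k2 by auto
        have "\<exists>!r'\<in>R'. \<exists>\<gamma>\<in>Gamma1 a b Ord. r2 = mmul a b r' \<gamma>" using R'2 in'(3) by blast
        moreover have "\<exists>\<gamma>\<in>Gamma1 a b Ord. r2 = mmul a b r2 \<gamma>" using mone_Gamma[OF o] mmul_mone by metis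
        ultimately show "r1 = r2" using in' \<delta> by blast
      qed
    qed
  qed
  show ?thesis using odd_part even_part1 even_part2 by blast
qed

end
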